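(* Let $\lambda=2/\sqrt5$, let $\eta=i\eta_1+j\eta_2+k\eta_3=a\bar\alpha$ and $H=a\Phi\bar a=iH_1+jH_2+kH_3$ on $\tilde P^-$ (so $H_1=d\eta_1+2\eta_2\wedge\eta_3$ cyclically), and define \[\varphi'=2\lambda\sum_{k=1}^3H_k\wedge\eta_k+\lambda^3\,\eta_1\wedge\eta_2\wedge\eta_3 .\] Then $\varphi'=-\varphi$, where $\varphi=2\lambda\sum_k\Phi_k\wedge\beta_k+\lambda^3\beta_1\wedge\beta_2\wedge\beta_3$. Hence $\varphi'$ describes (up to orientation) the same squashed nearly-parallel $G_2$ structure on $\tilde P^-$.
   Context: Quaternion-valued forms: for $\mathbb{H}$-valued forms, $A\wedge B$ multiplies coefficients and wedges; bar is conjugation. Setting: $(M,g_4)$ oriented, locally spin, self-dual Einstein 4-manifold with scalar curvature 12; $\Sigma^-$ its negative spin bundle with fibre coordinate $a\in\mathbb{H}$ relative to a local unit section; connection 1-form $\phi$ ($\mathrm{Im}\,\mathbb{H}$-valued), curvature $\Phi=d\phi+\phi\wedge\phi=i\Phi_1+j\Phi_2+k\Phi_3$; $\alpha=da-a\phi$, $\beta=\bar a\alpha=i\beta_1+j\beta_2+k\beta_3$ on the unit sphere bundle $\tilde P^-=\{|a|=1\}$. *)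

theory Defs
  imports "HOL-Analysis.Analysis"
begin

datatype quat = Quat (qre: real) (qi: real) (qj: real) (qk: real)

definition qmult :: "quat \<Rightarrow> quat \<Rightarrow> quat" (infixl "\<cdot>q" 70) where
  "p \<cdot>q q = Quat (qre p * qre q - qi p * qi q - qj p * qj q - qk p * qk q)
                  (qre p * qi q + qi p * qre q + qj p * qk q - qk p * qj q)
                  (qre p * qj q - qi p * qk q + qj p * qre q + qk p * qi q)
                  (qre p * qk q + qi p * qj q - qj p * qi q + qk p * qre q)"

definition qsub :: "quat \<Rightarrow> quat \<Rightarrow> quat" where
  "qsub p q = Quat (qre p - qre q) (qi p - qi q) (qj p - qj q) (qk p - qk q)"

definition qconj :: "quat \<Rightarrow> quat" where
  "qconj p = Quat (qre p) (- qi p) (- qj p) (- qk p)"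

definition qnorm :: "quat \<Rightarrow> real" where
  "qnorm p = sqrt ((qre p)\<^sup>2 + (qi p)\<^sup>2 + (qj p)\<^sup>2 + (qk p)\<^sup>2)"

definition qim :: "nat \<Rightarrow> quat \<Rightarrow> real" where
  "qim n p = (if n = 1 then qi p else if n = 2 then qj p else qk p)"

text \<open>An H-valued 1-form at a point: each real component is a real-linear functional
  on the tangent space.\<close>
definition qlinear :: "('v::real_vector \<Rightarrow> quat) \<Rightarrow> bool" where
  "qlinear f \<longleftrightarrow> linear (\<lambda>v. qre (f v)) \<and> linear (\<lambda>v. qi (f v))
                 \<and> linear (\<lambda>v. qj (f v)) \<and> linear (\<lambda>v. qk (f v))"

definition qtwoform :: "('v::real_vector \<Rightarrow> 'v \<Rightarrow> quat) \<Rightarrow> bool" where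
  "qtwoform F \<longleftrightarrow> (\<forall>u. qlinear (F u)) \<and> (\<forall>u v. F u v = qsub (Quat 0 0 0 0) (F v u))"

text \<open>Convention: (\<theta>\<wedge>\<psi>)(u,v) = \<theta>(u)\<psi>(v) - \<theta>(v)\<psi>(u); all wedges below follow it.\<close>
definition wedge21 :: "('v \<Rightarrow> 'v \<Rightarrow> real) \<Rightarrow> ('v \<Rightarrow> real) \<Rightarrow> 'v \<Rightarrow> 'v \<Rightarrow> 'v \<Rightarrow> real" where
  "wedge21 \<omega> \<theta> u v w = \<omega> u v * \<theta> w - \<omega> u w * \<theta> v + \<omega> v w * \<theta> u"

definition wedge111 :: "('v \<Rightarrow> real) \<Rightarrow> ('v \<Rightarrow> real) \<Rightarrow> ('v \<Rightarrow> real) \<Rightarrow> 'v \<Rightarrow> 'v \<Rightarrow> 'v \<Rightarrow> real" where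
  "wedge111 x y z u v w =
     x u * (y v * z w - y w * z v) - x v * (y u * z w - y w * z u) + x w * (y u * z v - y v * z u)"

definition g2form :: "real \<Rightarrow> ('v \<Rightarrow> 'v \<Rightarrow> quat) \<Rightarrow> ('v \<Rightarrow> quat) \<Rightarrow> 'v \<Rightarrow> 'v \<Rightarrow> 'v \<Rightarrow> real" where
  "g2form lam Om th u v w =
     2 * lam * (\<Sum>n\<in>{1,2,3::nat}. wedge21 (\<lambda>x y. qim n (Om x y)) (\<lambda>x. qim n (th x)) u v w)
     + lam ^ 3 * wedge111 (\<lambda>x. qim 1 (th x)) (\<lambda>x. qim 2 (th x)) (\<lambda>x. qim 3 (th x)) u v w"

end

theory Submission
  imports Defs
begin

definition rot :: "quat \<Rightarrow> quat \<Rightarrow> quat" where "rot a p = a \<cdot>q p \<cdot>q qconj a"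
definition dot :: "quat \<Rightarrow> quat \<Rightarrow> real" where "dot p q = qi p*qi q + qj p*qj q + qk p*qk q"
definition nsq :: "quat \<Rightarrow> real" where "nsq a = (qre a)^2 + (qi a)^2 + (qj a)^2 + (qk a)^2"

lemma rot_i: "qi (rot (Quat w x y z) p) = (w^2+x^2-y^2-z^2)*qi p + 2*(x*y-w*z)*qj p + 2*(x*z+w*y)*qk p"
  by (cases p) (simp add: rot_def qmult_def qconj_def power2_eq_square algebra_simps)
lemma rot_j: "qj (rot (Quat w x y z) p) = 2*(x*y+w*z)*qi p + (w^2-x^2+y^2-z^2)*qj p + 2*(y*z-w*x)*qk p"
  by (cases p) (simp add: rot_def qmult_def qconj_def power2_eq_square algebra_simps)
lemma rot_k: "qk (rot (Quat w x y z) p) = 2*(x*z-w*y)*qi p + 2*(y*z+w*x)*qj p + (w^2-x^2-y^2+z^2)*qk p"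
  by (cases p) (simp add: rot_def qmult_def qconj_def power2_eq_square algebra_simps)


lemma dot_gen: "(r11*p1+r12*p2+r13*p3)*(r11*q1+r12*q2+r13*q3) + (r21*p1+r22*p2+r23*p3)*(r21*q1+r22*q2+r23*q3)
  + (r31*p1+r32*p2+r33*p3)*(r31*q1+r32*q2+r33*q3) =
  p1*q1*(r11*r11+r21*r21+r31*r31) + p2*q2*(r12*r12+r22*r22+r32*r32) + p3*q3*(r13*r13+r23*r23+r33*r33)
  + (p1*q2+p2*q1)*(r11*r12+r21*r22+r31*r32) + (p1*q3+p3*q1)*(r11*r13+r21*r23+r31*r33)
  + (p2*q3+p3*q2)*(r12*r13+r22*r23+r32*r33)" for r11 :: real
  by (simp add: algebra_simps)

lemma dot_rot: "dot (rot a p) (rot a q) = (nsq a)^2 * dot p q"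
proof (cases a)
  case (Quat w x y z)
  let ?N = "w^2+x^2+y^2+z^2"
  have c1: "(w^2+x^2-y^2-z^2)*(w^2+x^2-y^2-z^2) + (2*(x*y+w*z))*(2*(x*y+w*z)) + (2*(x*z-w*y))*(2*(x*z-w*y)) = ?N^2"
    by (simp add: power2_eq_square algebra_simps)
  have c2: "(2*(x*y-w*z))*(2*(x*y-w*z)) + (w^2-x^2+y^2-z^2)*(w^2-x^2+y^2-z^2) + (2*(y*z+w*x))*(2*(y*z+w*x)) = ?N^2"
    by (simp add: power2_eq_square algebra_simps)
  have c3: "(2*(x*z+w*y))*(2*(x*z+w*y)) + (2*(y*z-w*x))*(2*(y*z-w*x)) + (w^2-x^2-y^2+z^2)*(w^2-x^2-y^2+z^2) = ?N^2"
    by (simp add: power2_eq_square algebra_simps)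
  have c12: "(w^2+x^2-y^2-z^2)*(2*(x*y-w*z)) + (2*(x*y+w*z))*(w^2-x^2+y^2-z^2) + (2*(x*z-w*y))*(2*(y*z+w*x)) = 0"
    by (simp add: power2_eq_square algebra_simps)
  have c13: "(w^2+x^2-y^2-z^2)*(2*(x*z+w*y)) + (2*(x*y+w*z))*(2*(y*z-w*x)) + (2*(x*z-w*y))*(w^2-x^2-y^2+z^2) = 0"
    by (simp add: power2_eq_square algebra_simps)
  have c23: "(2*(x*y-w*z))*(2*(x*z+w*y)) + (w^2-x^2+y^2-z^2)*(2*(y*z-w*x)) + (2*(y*z+w*x))*(w^2-x^2-y^2+z^2) = 0"
    by (simp add: power2_eq_square algebra_simps)
  show ?thesis unfolding Quat dot_def rot_i rot_j rot_k dot_gen c1 c2 c3 c12 c13 c23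
    by (simp add: nsq_def algebra_simps)
qed


definition det3 :: "quat \<Rightarrow> quat \<Rightarrow> quat \<Rightarrow> real" where
 "det3 p q r = qi p*(qj q*qk r - qj r*qk q) - qi q*(qj p*qk r - qj r*qk p) + qi r*(qj p*qk q - qj q*qk p)"

definition d3 :: "real \<Rightarrow> real \<Rightarrow> real \<Rightarrow> real \<Rightarrow> real \<Rightarrow> real \<Rightarrow> real \<Rightarrow> real \<Rightarrow> real \<Rightarrow> real" where
 "d3 p1 p2 p3 q1 q2 q3 t1 t2 t3 = p1*(q2*t3 - t2*q3) - q1*(p2*t3 - t2*p3) + t1*(p2*q3 - q2*p3)"

lemma det_gen: "d3 (r11*p1+r12*p2+r13*p3) (r21*p1+r22*p2+r23*p3) (r31*p1+r32*p2+r33*p3)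
   (r11*q1+r12*q2+r13*q3) (r21*q1+r22*q2+r23*q3) (r31*q1+r32*q2+r33*q3)
   (r11*t1+r12*t2+r13*t3) (r21*t1+r22*t2+r23*t3) (r31*t1+r32*t2+r33*t3)
  = d3 r11 r21 r31 r12 r22 r32 r13 r23 r33 * d3 p1 p2 p3 q1 q2 q3 t1 t2 t3"
  unfolding d3_def by algebra

lemma det_rot: "det3 (rot a p) (rot a q) (rot a r) = (nsq a)^3 * det3 p q r"
proof (cases a)
  case (Quat w x y z)
  have dR: "d3 (w^2+x^2-y^2-z^2) (2*(x*y+w*z)) (2*(x*z-w*y)) (2*(x*y-w*z)) (w^2-x^2+y^2-z^2) (2*(y*z+w*x))
     (2*(x*z+w*y)) (2*(y*z-w*x)) (w^2-x^2-y^2+z^2) = (w^2+x^2+y^2+z^2)^3"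
    unfolding d3_def by (simp add: power2_eq_square power3_eq_cube algebra_simps)
  have "det3 (rot a p) (rot a q) (rot a r) = d3 (qi (rot a p)) (qj (rot a p)) (qk (rot a p))
     (qi (rot a q)) (qj (rot a q)) (qk (rot a q)) (qi (rot a r)) (qj (rot a r)) (qk (rot a r))"
    by (simp add: det3_def d3_def)
  also have "\<dots> = (w^2+x^2+y^2+z^2)^3 * d3 (qi p) (qj p) (qk p) (qi q) (qj q) (qk q) (qi r) (qj r) (qk r)"
    unfolding Quat rot_i rot_j rot_k det_gen dR ..
  finally show ?thesis by (simp add: Quat nsq_def det3_def d3_def)
qed


lemma eta_rot: "nsq a * qi (a \<cdot>q qconj c) = - qi (rot a (qconj a \<cdot>q c))"
  "nsq a * qj (a \<cdot>q qconj c) = - qj (rot a (qconj a \<cdot>q c))"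
  "nsq a * qk (a \<cdot>q qconj c) = - qk (rot a (qconj a \<cdot>q c))"
  by (cases a, cases c, simp add: rot_def nsq_def qmult_def qconj_def power2_eq_square algebra_simps)+

lemma g2_expand: "g2form lam Om th u v w = 2*lam*(dot (Om u v) (th w) - dot (Om u w) (th v) + dot (Om v w) (th u))
   + lam^3 * det3 (th u) (th v) (th w)"
  by (simp add: g2form_def wedge21_def wedge111_def dot_def det3_def qim_def algebra_simps)

theorem proposition2p4:
  fixes a :: quat
    and da phi :: "'v::real_vector \<Rightarrow> quat"
    and Phi :: "'v \<Rightarrow> 'v \<Rightarrow> quat"
  assumes unit: "qnorm a = 1"
    and da_lin: "qlinear da"
    and tangent: "\<forall>v. qre (qconj a \<cdot>q da v) = 0"
    and phi_lin: "qlinear phi" and phi_im: "\<forall>v. qre (phi v) = 0"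
    and Phi_form: "qtwoform Phi" and Phi_im: "\<forall>u v. qre (Phi u v) = 0"
  shows
    "let lam = 2 / sqrt 5;
         alpha = (\<lambda>v. qsub (da v) (a \<cdot>q phi v));
         beta = (\<lambda>v. qconj a \<cdot>q alpha v);
         eta = (\<lambda>v. a \<cdot>q qconj (alpha v));
         H = (\<lambda>u v. a \<cdot>q Phi u v \<cdot>q qconj a)
     in \<forall>u v w. g2form lam H eta u v w = - g2form lam Phi beta u v w"
proof -
  have N: "nsq a = 1" using unit unfolding qnorm_def nsq_def by simp
  show ?thesis
  proof (unfold Let_def, intro allI)
    fix u v w
    let ?beta = "\<lambda>v. qconj a \<cdot>q qsub (da v) (a \<cdot>q phi v)"
    let ?eta = "\<lambda>v. a \<cdot>q qconj (qsub (da v) (a \<cdot>q phi v))"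
    let ?H = "\<lambda>u v. a \<cdot>q Phi u v \<cdot>q qconj a"
    have e: "\<And>X x. dot X (?eta x) = - dot X (rot a (?beta x))"
      using eta_rot[of a] N by (simp add: dot_def)
    have d: "det3 (?eta u) (?eta v) (?eta w) = - det3 (rot a (?beta u)) (rot a (?beta v)) (rot a (?beta w))"
      using eta_rot[of a] N by (simp add: det3_def algebra_simps)
    have h: "\<And>x y. ?H x y = rot a (Phi x y)" by (simp add: rot_def)
    show "g2form (2 / sqrt 5) ?H ?eta u v w = - g2form (2 / sqrt 5) Phi ?beta u v w"
      unfolding g2_expand h e d dot_rot det_rot N by (simp add: algebra_simps diff_divide_distrib add_divide_distrib)
  qed
qed

end
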